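(* Let $0<\gamma<n$ and let $p(\cdot)\in\mathscr{P}(\mathbb{R}^n)$ with $1<p_-\le p_+<n/\gamma$. If $f\in L^{p(\cdot)}(\mathbb{R}^n)$, then $M_\gamma(f)(x)<\infty$ for almost every $x\in\mathbb{R}^n$.
   Context: For $0\le\gamma<n$ and locally integrable $f$, $M_\gamma(f)(x)=\sup_{Q\ni x}|Q|^{\gamma/n-1}\int_Q|f(y)|\,dy$, the supremum over cubes $Q$ with sides parallel to the axes containing $x$. For measurable $p(\cdot):\mathbb{R}^n\to[1,\infty)$, $L^{p(\cdot)}(\mathbb{R}^n)$ is the space of measurable $f$ with $\int(|f(x)|/\lambda)^{p(x)}dx<\infty$ for some $\lambda>0$. $p_-=\operatorname{ess\,inf}p$, $p_+=\operatorname{ess\,sup}p$, and $\mathscr{P}(\mathbb{R}^n)$ is the set of measurable $p(\cdot):\mathbb{R}^n\to[1,\infty)$ with $1<p_-$ and $p_+<\infty$. *)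

theory Defs
  imports "HOL-Analysis.Analysis" "HOL-Probability.Essential_Supremum"
begin

text \<open>Points of R^n are vectors of type real^'n, with n = CARD('n).\<close>

definition axis_cube :: "(real^'n) set \<Rightarrow> bool" where
  "axis_cube Q \<longleftrightarrow> (\<exists>a::real^'n. \<exists>l>0. Q = cbox a (a + (\<chi> i. l)))"

definition frac_maximal :: "real \<Rightarrow> (real^'n \<Rightarrow> real) \<Rightarrow> real^'n \<Rightarrow> ennreal" where
  "frac_maximal \<gamma> f x =
     (SUP Q \<in> {Q. axis_cube Q \<and> x \<in> Q}.
        ennreal (measure lebesgue Q powr (\<gamma> / real CARD('n) - 1)) *
        (\<integral>\<^sup>+ y \<in> Q. ennreal \<bar>f y\<bar> \<partial>lebesgue))"

definition essinf :: "'a measure \<Rightarrow> ('a \<Rightarrow> real) \<Rightarrow> ereal" where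
  "essinf M p = - esssup M (\<lambda>x. - ereal (p x))"

definition p_minus :: "(real^'n \<Rightarrow> real) \<Rightarrow> ereal" where
  "p_minus p = essinf lebesgue p"

definition p_plus :: "(real^'n \<Rightarrow> real) \<Rightarrow> ereal" where
  "p_plus p = esssup lebesgue (\<lambda>x. ereal (p x))"

definition var_exponents :: "(real^'n \<Rightarrow> real) set" where
  "var_exponents = {p. p \<in> borel_measurable lebesgue \<and> (\<forall>x. 1 \<le> p x) \<and>
                        1 < p_minus p \<and> p_plus p < \<infinity>}"

definition var_Lp :: "(real^'n \<Rightarrow> real) \<Rightarrow> (real^'n \<Rightarrow> real) set" where
  "var_Lp p = {f. f \<in> borel_measurable lebesgue \<and>
     (\<exists>c>0. (\<integral>\<^sup>+ x. ennreal ((\<bar>f x\<bar> / c) powr p x) \<partial>lebesgue) < \<infinity>)}"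

end

theory Submission
  imports Defs
begin

lemma cube_facts:
  fixes a :: "real^'n" and l :: real
  assumes l: "0 < l"
  shows "cbox a (a + (\<chi> i. l)) \<in> sets lebesgue"
    and "measure lebesgue (cbox a (a + (\<chi> i. l))) = l ^ CARD('n)"
    and "emeasure lebesgue (cbox a (a + (\<chi> i. l))) = ennreal (l ^ CARD('n))"
proof -
  show "cbox a (a + (\<chi> i. l)) \<in> sets lebesgue" by simp
  have ne: "cbox a (a + (\<chi> i. l)) \<noteq> {}"
    using l by (simp add: interval_ne_empty_cart) 
  show m: "measure lebesgue (cbox a (a + (\<chi> i. l))) = l ^ CARD('n)"
    using content_cbox_cart[OF ne] by simp
  show "emeasure lebesgue (cbox a (a + (\<chi> i. l))) = ennreal (l ^ CARD('n))"
    using m emeasure_eq_ennreal_measure[of lebesgue "cbox a (a + (\<chi> i. l))"]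
      emeasure_lborel_cbox_finite[of a "a + (\<chi> i. l)"] by simp
qed

lemma cube_dist:
  fixes a x y :: "real^'n" and l :: real
  assumes "x \<in> cbox a (a + (\<chi> i. l))" "y \<in> cbox a (a + (\<chi> i. l))"
  shows "dist x y \<le> real CARD('n) * l"
proof -
  have "\<And>i. \<bar>(x - y) $ i\<bar> \<le> l"
    using assms by (auto simp: mem_box_cart abs_le_iff) (smt (verit, best))+
  then have "sum (\<lambda>i. \<bar>(x - y)$i\<bar>) UNIV \<le> sum (\<lambda>i. l) (UNIV::'n set)"
    by (intro sum_mono) auto
  then show ?thesis using norm_le_l1_cart[of "x - y"] by (simp add: dist_norm)
qed

lemma emeasure_UN_countable_le:
  assumes sets[measurable]: "\<And>i. i \<in> I \<Longrightarrow> X i \<in> sets M" and I[simp]: "countable I"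
  shows "emeasure M (\<Union>(X ` I)) \<le> (\<integral>\<^sup>+i. emeasure M (X i) \<partial>count_space I)"
proof -
  note sets.countable_UN'[unfolded subset_eq, measurable]
  have le: "indicator (\<Union>(X ` I)) x \<le> (\<integral>\<^sup>+ i. indicator (X i) x \<partial>count_space I)" for x
  proof cases
    assume "x \<in> \<Union>(X ` I)"
    then obtain j where j: "x \<in> X j" "j \<in> I" by auto
    have "(\<integral>\<^sup>+ i. indicator {j} i \<partial>count_space I) \<le> (\<integral>\<^sup>+ i. indicator (X i) x \<partial>count_space I)"
      using j by (intro nn_integral_mono) (auto split: split_indicator)
    moreover have "(\<integral>\<^sup>+ i. indicator {j} i \<partial>count_space I) = (1::ennreal)"
      using j by (simp add: nn_integral_indicator)
    ultimately show ?thesis using \<open>x \<in> \<Union>(X ` I)\<close> by simp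
  qed simp
  have "emeasure M (\<Union>(X ` I)) = (\<integral>\<^sup>+x. indicator (\<Union>(X ` I)) x \<partial>M)"
    by simp
  also have "\<dots> \<le> (\<integral>\<^sup>+x. \<integral>\<^sup>+ i. indicator (X i) x \<partial>count_space I \<partial>M)"
    by (intro nn_integral_mono le)
  also have "\<dots> = (\<integral>\<^sup>+i. \<integral>\<^sup>+x. indicator (X i) x \<partial>M \<partial>count_space I)"
    by (simp add: nn_integral_count_space_nn_integral)
  finally show ?thesis
    by (simp cong: nn_integral_cong_simp)
qed

lemma emeasure_cball_cart:
  assumes "0 \<le> R"
  shows "emeasure lebesgue (cball (x::real^'n) R) = ennreal (R ^ CARD('n) * measure lborel (ball (0::real^'n) 1))"
proof -
  have "emeasure lebesgue (cball x R) = emeasure lborel (cball x R)" by simp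
  also have "\<dots> = ennreal (measure lborel (cball x R))"
    by (rule emeasure_eq_ennreal_measure) (use emeasure_lborel_cball_finite[of x R] in auto)
  also have "measure lborel (cball x R) = R ^ CARD('n) * measure lborel (ball (0::real^'n) 1)"
    using content_cball_conv_ball[of x R] content_ball_conv_unit_ball[of R x] assms by simp
  finally show ?thesis .
qed

lemma small_cubes_AE:
  fixes g :: "real^'n \<Rightarrow> ennreal"
  assumes g[measurable]: "g \<in> borel_measurable lebesgue" and fin: "(\<integral>\<^sup>+x. g x \<partial>lebesgue) < \<infinity>"
  shows "AE x in lebesgue. \<exists>K::real. \<forall>a l. 0 < l \<longrightarrow> l \<le> 1 \<longrightarrow> x \<in> cbox a (a + (\<chi> i. l)) \<longrightarrow>
            (\<integral>\<^sup>+y\<in>cbox a (a + (\<chi> i. l)). g y \<partial>lebesgue) \<le> ennreal (K * l ^ CARD('n))"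
proof -
  define d where "d = real CARD('n)"
  define N where "N = CARD('n)"
  define cube where "cube a l = cbox a (a + (\<chi> i. (l::real)))" for a :: "real^'n" and l
  define I where "I = enn2real (\<integral>\<^sup>+x. g x \<partial>lebesgue)"
  have I: "(\<integral>\<^sup>+x. g x \<partial>lebesgue) = ennreal I" using fin by (simp add: I_def)
  have I0: "0 \<le> I" by (simp add: I_def)
  define w where "w = measure lborel (ball (0::real^'n) 1)"
  have w0: "0 \<le> w" by (simp add: w_def)
  have d0: "0 < d" by (simp add: d_def)
  define Cst where "Cst = w * 5^N * d^N"
  have C0: "0 \<le> Cst" using w0 d0 by (simp add: Cst_def)
  define bad where "bad = {x. \<not> (\<exists>K::real. \<forall>a l. 0 < l \<longrightarrow> l \<le> 1 \<longrightarrow> x \<in> cube a l \<longrightarrow>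
            (\<integral>\<^sup>+y\<in>cube a l. g y \<partial>lebesgue) \<le> ennreal (K * l ^ N))}"
  have "negligible bad"
    unfolding negligible_outer_le
  proof (intro allI impI)
    fix e :: real assume e: "0 < e"
    define t where "t = Cst * I / e + 1"
    have t: "0 < t" using C0 I0 e unfolding t_def by (smt (verit) divide_nonneg_pos mult_nonneg_nonneg)
    define E where "E = {x. \<exists>a l. 0 < l \<and> l \<le> 1 \<and> x \<in> cube a l \<and>
                       ennreal (t * l^N) < (\<integral>\<^sup>+y\<in>cube a l. g y \<partial>lebesgue)}"
    have badE: "bad \<subseteq> E"
    proof
      fix x assume "x \<in> bad"
      then have "\<not> (\<forall>a l. 0 < l \<longrightarrow> l \<le> 1 \<longrightarrow> x \<in> cube a l \<longrightarrow>
            (\<integral>\<^sup>+y\<in>cube a l. g y \<partial>lebesgue) \<le> ennreal (t * l ^ N))"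
        unfolding bad_def by blast
      then obtain a l where "0 < l" "l \<le> 1" "x \<in> cube a l"
          "\<not> (\<integral>\<^sup>+y\<in>cube a l. g y \<partial>lebesgue) \<le> ennreal (t * l ^ N)"
        by blast
      then show "x \<in> E" unfolding E_def by (auto simp: not_le)
    qed
    have "\<forall>x\<in>E. \<exists>al. 0 < snd al \<and> snd al \<le> 1 \<and> x \<in> cube (fst al) (snd al) \<and>
                       ennreal (t * snd al^N) < (\<integral>\<^sup>+y\<in>cube (fst al) (snd al). g y \<partial>lebesgue)"
    proof
      fix x assume "x \<in> E"
      then obtain a l where "0 < l \<and> l \<le> 1 \<and> x \<in> cube a l \<and>
                       ennreal (t * l^N) < (\<integral>\<^sup>+y\<in>cube a l. g y \<partial>lebesgue)"
        unfolding E_def by blast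
      then show "\<exists>al. 0 < snd al \<and> snd al \<le> 1 \<and> x \<in> cube (fst al) (snd al) \<and>
                       ennreal (t * snd al^N) < (\<integral>\<^sup>+y\<in>cube (fst al) (snd al). g y \<partial>lebesgue)"
        by (intro exI[of _ "(a, l)"]) simp
    qed
    from bchoice[OF this] obtain F where F: "\<forall>x\<in>E. 0 < snd (F x) \<and> snd (F x) \<le> 1 \<and> x \<in> cube (fst (F x)) (snd (F x)) \<and>
                       ennreal (t * snd (F x)^N) < (\<integral>\<^sup>+y\<in>cube (fst (F x)) (snd (F x)). g y \<partial>lebesgue)"
      ..
    define A where "A x = fst (F x)" for x
    define L where "L x = snd (F x)" for x
    define r where "r x = d * L x" for x
    have AL: "\<And>x. x \<in> E \<Longrightarrow> 0 < L x \<and> L x \<le> 1 \<and> x \<in> cube (A x) (L x) \<and>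
                       ennreal (t * L x^N) < (\<integral>\<^sup>+y\<in>cube (A x) (L x). g y \<partial>lebesgue)"
      using F unfolding A_def L_def by simp
    have r: "\<And>x. x \<in> E \<Longrightarrow> 0 < r x \<and> r x \<le> d"
      using AL d0 by (auto simp: r_def)
    have sub: "\<And>x. x \<in> E \<Longrightarrow> cube (A x) (L x) \<subseteq> cball x (r x)"
    proof
      fix x y assume x: "x \<in> E" and y: "y \<in> cube (A x) (L x)"
      then show "y \<in> cball x (r x)"
        using cube_dist[of x "A x" "L x" y] AL[OF x] by (simp add: cube_def r_def d_def mem_cball)
    qed
    have Ecov: "E \<subseteq> (\<Union>i\<in>E. cball (id i) (r i))"
      using r by force
    obtain C where C: "countable C" "C \<subseteq> E"
        "pairwise (\<lambda>i j. disjnt (cball (id i) (r i)) (cball (id j) (r j))) C"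
        "E \<subseteq> (\<Union>i\<in>C. cball (id i) (5 * r i))"
      using Vitali_covering_lemma_cballs[OF Ecov, of d] r by blast
    define T where "T = (\<Union>i\<in>C. cball i (5 * r i))"
    have Tsets: "T \<in> sets lebesgue"
      unfolding T_def using C(1) by (intro sets.countable_UN') auto
    have dens: "emeasure (density lebesgue g) S = (\<integral>\<^sup>+y\<in>S. g y \<partial>lebesgue)" if "S \<in> sets lebesgue" for S
      using that by (simp add: emeasure_density)
    have "emeasure lebesgue T \<le> (\<integral>\<^sup>+i. emeasure lebesgue (cball i (5 * r i)) \<partial>count_space C)"
      unfolding T_def using C(1) by (intro emeasure_UN_countable_le) auto
    also have "\<dots> \<le> (\<integral>\<^sup>+i. ennreal (Cst / t) * emeasure (density lebesgue g) (cball i (r i)) \<partial>count_space C)"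
    proof (intro nn_integral_mono)
      fix i assume "i \<in> space (count_space C)"
      then have i: "i \<in> E" using C(2) by auto
      have "emeasure lebesgue (cball i (5 * r i)) = ennreal ((5 * r i) ^ N * w)"
        using emeasure_cball_cart[of "5 * r i" i] r[OF i] by (simp add: w_def N_def)
      also have "(5 * r i) ^ N * w = Cst / t * (t * L i ^ N)"
        using t by (simp add: r_def Cst_def power_mult_distrib)
      also have "ennreal (Cst / t * (t * L i ^ N)) = ennreal (Cst / t) * ennreal (t * L i ^ N)"
        by (intro ennreal_mult) (use C0 t AL[OF i] in auto)
      also have "\<dots> \<le> ennreal (Cst / t) * (\<integral>\<^sup>+y\<in>cube (A i) (L i). g y \<partial>lebesgue)"
        using AL[OF i] by (intro mult_left_mono) auto
      also have "(\<integral>\<^sup>+y\<in>cube (A i) (L i). g y \<partial>lebesgue) \<le> (\<integral>\<^sup>+y\<in>cball i (r i). g y \<partial>lebesgue)"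
        using sub[OF i] by (intro nn_integral_mono) (auto split: split_indicator intro: mult_left_mono)
      also have "\<dots> = emeasure (density lebesgue g) (cball i (r i))"
        by (simp add: dens)
      finally show "emeasure lebesgue (cball i (5 * r i)) \<le> ennreal (Cst / t) * emeasure (density lebesgue g) (cball i (r i))"
        by (simp add: mult_left_mono)
    qed
    also have "\<dots> = ennreal (Cst / t) * (\<integral>\<^sup>+i. emeasure (density lebesgue g) (cball i (r i)) \<partial>count_space C)"
      by (simp add: nn_integral_cmult)
    also have "(\<integral>\<^sup>+i. emeasure (density lebesgue g) (cball i (r i)) \<partial>count_space C)
             = emeasure (density lebesgue g) (\<Union>i\<in>C. cball i (r i))"
    proof (rule emeasure_UN_countable[symmetric])
      show "disjoint_family_on (\<lambda>i. cball i (r i)) C"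
        using C(3) unfolding disjoint_family_on_def pairwise_def disjnt_def by auto
    qed (use C(1) in auto)
    also have "\<dots> \<le> emeasure (density lebesgue g) UNIV"
      by (intro emeasure_mono) auto
    also have "\<dots> = ennreal I"
      using dens[of UNIV] I by simp
    also have "ennreal (Cst / t) * ennreal I \<le> ennreal e"
    proof -
      have "Cst / t * I \<le> e"
        using t e C0 I0 by (simp add: t_def field_simps)
      then show ?thesis using C0 t I0 by (simp add: ennreal_mult[symmetric] ennreal_leI)
    qed
    finally have Tle: "emeasure lebesgue T \<le> ennreal e"
      by (simp add: mult_left_mono)
    show "\<exists>T. bad \<subseteq> T \<and> T \<in> lmeasurable \<and> measure lebesgue T \<le> e"
    proof (intro exI conjI)
      show "bad \<subseteq> T" using badE C(4) by (auto simp: T_def)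
      show "T \<in> lmeasurable" using Tsets Tle by (intro fmeasurableI) (auto simp: top_unique order_le_less_trans)
      show "measure lebesgue T \<le> e" using Tle e by (simp add: measure_def enn2real_leI)
    qed
  qed
  then have "bad \<in> null_sets lebesgue" by (simp add: negligible_iff_null_sets)
  then show ?thesis
    by (rule AE_I') (auto simp: bad_def cube_def N_def)
qed

lemma pw_bound:
  fixes u c q P t :: real
  assumes c: "0 < c" and q: "1 \<le> q" "q \<le> P" and t: "0 < t" "t \<le> 1"
  shows "\<bar>u\<bar> \<le> c * t + c * t powr (1 - P) * (\<bar>u\<bar> / c) powr q"
proof -
  define v where "v = \<bar>u\<bar> / c"
  have v0: "0 \<le> v" using c by (simp add: v_def)
  have u: "\<bar>u\<bar> = c * v" using c by (simp add: v_def)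
  have nn: "0 \<le> c * t powr (1 - P) * v powr q" using c by simp
  have "c * v \<le> c * t + c * t powr (1 - P) * v powr q"
  proof (cases "v \<le> t")
    case True
    then show ?thesis using c nn by (smt (verit) mult_left_mono)
  next
    case False
    then have vt: "t < v" by simp
    have "v = v powr q * v powr (1 - q)"
      using vt t by (simp add: powr_add[symmetric])
    also have "v powr (1 - q) \<le> t powr (1 - q)"
      using vt t q by (intro powr_mono2') auto
    also have "t powr (1 - q) \<le> t powr (1 - P)"
      using t q by (intro powr_mono') auto
    finally have "v \<le> v powr q * t powr (1 - P)"
      by (simp add: mult_left_mono)
    then have "c * v \<le> c * t powr (1 - P) * v powr q"
      using c by (simp add: mult_ac)
    then show ?thesis using c t by (smt (verit) mult_pos_pos)
  qed
  then show ?thesis by (metis u v_def)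
qed

lemma small_calc:
  fixes V g K :: real
  assumes "0 < V" "V \<le> 1" "0 \<le> g" "0 \<le> K"
  shows "V powr (g - 1) * (K * V) \<le> K"
proof -
  have "V powr (g - 1) * (K * V) = K * V powr g"
    using assms by (simp add: powr_diff field_simps)
  also have "\<dots> \<le> K * 1"
    using assms by (intro mult_left_mono powr_le1) auto
  finally show ?thesis by simp
qed

lemma large_calc:
  fixes V P c A g :: real
  assumes V: "1 \<le> V" and P: "1 \<le> P" and c: "0 < c" and A: "0 \<le> A" and gP: "g * P < 1"
  shows "V powr (g - 1) * (c * V powr (- 1 / P) * V + c * (V powr (- 1 / P)) powr (1 - P) * A) \<le> c + c * A"
proof -
  define E where "E = g - 1 / P"
  have E: "E \<le> 0" using gP P by (simp add: E_def field_simps)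
  have V0: "0 < V" using V by simp
  have e1: "V powr (g - 1) * (V powr (- 1 / P) * V) = V powr E"
  proof -
    have 1: "V powr (g - 1 + - 1 / P + 1) = V powr (g - 1) * V powr (- 1 / P) * V powr 1"
      by (simp only: powr_add)
    have 2: "V powr 1 = V" using V0 by simp
    have 3: "g - 1 + - 1 / P + 1 = E" by (simp add: E_def)
    show ?thesis using 1 unfolding 2 3 by (simp add: mult.assoc)
  qed
  have e2: "V powr (g - 1) * (V powr (- 1 / P)) powr (1 - P) = V powr E"
    using V0 P by (simp add: E_def powr_powr powr_add[symmetric] field_simps)
  have le: "V powr E \<le> 1" using powr_mono[OF E V] V by simp
  have "V powr (g - 1) * (c * V powr (- 1 / P) * V + c * (V powr (- 1 / P)) powr (1 - P) * A)
      = c * (V powr (g - 1) * (V powr (- 1 / P) * V)) + c * A * (V powr (g - 1) * (V powr (- 1 / P)) powr (1 - P))"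
    by (simp add: algebra_simps)
  also have "\<dots> = c * V powr E + c * A * V powr E" by (simp only: e1 e2)
  also have "\<dots> \<le> c * 1 + c * A * 1"
    using le c A by (intro add_mono mult_left_mono) auto
  finally show ?thesis by simp
qed

theorem lemma2p6:
  fixes \<gamma> :: real and p f :: "real^'n \<Rightarrow> real"
  assumes "0 < \<gamma>" and "\<gamma> < real CARD('n)"
    and "p \<in> var_exponents"
    and "1 < p_minus p" and "p_minus p \<le> p_plus p"
    and "p_plus p < ereal (real CARD('n) / \<gamma>)"
    and "f \<in> var_Lp p"
  shows "AE x in lebesgue. frac_maximal \<gamma> f x < \<infinity>"
proof -
  define d where "d = real CARD('n)"
  define N where "N = CARD('n)"
  have d0: "0 < d" by (simp add: d_def)
  from assms(7) obtain c where c: "0 < c" and fm[measurable]: "f \<in> borel_measurable lebesgue"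
      and A: "(\<integral>\<^sup>+x. ennreal ((\<bar>f x\<bar> / c) powr p x) \<partial>lebesgue) < \<infinity>"
    by (auto simp: var_Lp_def)
  from assms(3) have pm[measurable]: "p \<in> borel_measurable lebesgue" and p1: "\<And>x. 1 \<le> p x"
    by (auto simp: var_exponents_def)
  define h where "h x = ennreal ((\<bar>f x\<bar> / c) powr p x)" for x
  have hm[measurable]: "h \<in> borel_measurable lebesgue" unfolding h_def by measurable
  define Ar where "Ar = enn2real (\<integral>\<^sup>+x. h x \<partial>lebesgue)"
  have Ar: "(\<integral>\<^sup>+x. h x \<partial>lebesgue) = ennreal Ar" using A by (simp add: Ar_def h_def)
  have Ar0: "0 \<le> Ar" by (simp add: Ar_def)
  have gd: "1 < d / \<gamma>" using assms(1,2) by (simp add: d_def)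
  obtain P where P1: "1 \<le> P" and Pl: "P < d / \<gamma>" and AEP: "AE y in lebesgue. p y \<le> P"
  proof -
    have ae: "AE y in lebesgue. ereal (p y) \<le> p_plus p"
      unfolding p_plus_def by (rule esssup_AE)
    show ?thesis
    proof (cases "p_plus p")
      case (real r)
      show ?thesis
      proof (rule that[of "max 1 r"])
        show "1 \<le> max 1 r" by simp
        show "max 1 r < d / \<gamma>" using gd assms(6) real by (simp add: d_def)
        show "AE y in lebesgue. p y \<le> max 1 r" using ae real by (auto elim: eventually_mono)
      qed
    next
      case PInf
      then show ?thesis using assms(6) by simp
    next
      case MInf
      show ?thesis
      proof (rule that[of 1])
        show "AE y in lebesgue. p y \<le> 1" using ae MInf by (auto elim: eventually_mono)
      qed (use gd in auto)
    qed
  qed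
  define g where "g R x = ennreal \<bar>f x\<bar> * indicator (ball 0 (real R)) x" for R :: nat and x
  have ballm[measurable]: "ball (0::real^'n) r \<in> sets lebesgue" for r by simp
  have gm[measurable]: "g R \<in> borel_measurable lebesgue" for R unfolding g_def by measurable
  have gfin: "(\<integral>\<^sup>+x. g R x \<partial>lebesgue) < \<infinity>" for R
  proof -
    have "(\<integral>\<^sup>+x. g R x \<partial>lebesgue) \<le> (\<integral>\<^sup>+x. ennreal c * indicator (ball (0::real^'n) (real R)) x + ennreal c * h x \<partial>lebesgue)"
    proof (intro nn_integral_mono)
      fix x
      have "\<bar>f x\<bar> \<le> c * 1 + c * 1 powr (1 - p x) * (\<bar>f x\<bar> / c) powr p x"
        using pw_bound[OF c p1 order_refl, of 1] by simp
      then have "ennreal \<bar>f x\<bar> \<le> ennreal c + ennreal c * h x"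
        using c by (simp add: h_def ennreal_mult[symmetric] ennreal_plus[symmetric] del: ennreal_plus)
      then show "g R x \<le> ennreal c * indicator (ball (0::real^'n) (real R)) x + ennreal c * h x"
        by (auto simp: g_def split: split_indicator)
    qed
    also have "\<dots> = ennreal c * emeasure lebesgue (ball (0::real^'n) (real R)) + ennreal c * ennreal Ar"
    proof -
      have "(\<integral>\<^sup>+x. ennreal c * indicator (ball (0::real^'n) (real R)) x + ennreal c * h x \<partial>lebesgue)
          = (\<integral>\<^sup>+x. ennreal c * indicator (ball (0::real^'n) (real R)) x \<partial>lebesgue) + (\<integral>\<^sup>+x. ennreal c * h x \<partial>lebesgue)"
        by (subst nn_integral_add) auto
      also have "(\<integral>\<^sup>+x. ennreal c * indicator (ball (0::real^'n) (real R)) x \<partial>lebesgue) = ennreal c * emeasure lebesgue (ball (0::real^'n) (real R))"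
        by (rule nn_integral_cmult_indicator) simp
      also have "(\<integral>\<^sup>+x. ennreal c * h x \<partial>lebesgue) = ennreal c * ennreal Ar"
        by (simp add: nn_integral_cmult Ar)
      finally show ?thesis .
    qed
    also have "\<dots> < \<infinity>"
      using emeasure_lborel_ball_finite[of "0::real^'n" "real R"]
      by (simp add: ennreal_mult_less_top ennreal_mult_eq_top_iff)
    finally show ?thesis .
  qed
  have AEs: "AE x in lebesgue. \<forall>R. \<exists>K::real. \<forall>a l. 0 < l \<longrightarrow> l \<le> 1 \<longrightarrow> x \<in> cbox a (a + (\<chi> i. l)) \<longrightarrow>
            (\<integral>\<^sup>+y\<in>cbox a (a + (\<chi> i. l)). g R y \<partial>lebesgue) \<le> ennreal (K * l ^ CARD('n))"
    unfolding AE_all_countable using small_cubes_AE[OF gm gfin] by blast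
  show ?thesis
    using AEs
  proof (rule eventually_mono)
    fix x assume H: "\<forall>R. \<exists>K::real. \<forall>a l. 0 < l \<longrightarrow> l \<le> 1 \<longrightarrow> x \<in> cbox a (a + (\<chi> i. l)) \<longrightarrow>
            (\<integral>\<^sup>+y\<in>cbox a (a + (\<chi> i. l)). g R y \<partial>lebesgue) \<le> ennreal (K * l ^ CARD('n))"
    obtain R :: nat where R: "norm x + d + 1 < real R" using reals_Archimedean2 by blast
    obtain K where K: "\<And>a l. 0 < l \<Longrightarrow> l \<le> 1 \<Longrightarrow> x \<in> cbox a (a + (\<chi> i. l)) \<Longrightarrow>
            (\<integral>\<^sup>+y\<in>cbox a (a + (\<chi> i. l)). g R y \<partial>lebesgue) \<le> ennreal (K * l ^ CARD('n))"
      using H by blast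
    define K' where "K' = max K 0"
    define B where "B = max K' (c + c * Ar)"
    have "frac_maximal \<gamma> f x \<le> ennreal B"
      unfolding frac_maximal_def
    proof (rule SUP_least)
      fix Q assume "Q \<in> {Q. axis_cube Q \<and> x \<in> Q}"
      then obtain a l where l: "0 < l" and Q: "Q = cbox a (a + (\<chi> i. l))" and xQ: "x \<in> Q"
        by (auto simp: axis_cube_def)
      define V where "V = l ^ N"
      have V0: "0 < V" using l by (simp add: V_def)
      have mQ: "measure lebesgue Q = V" using cube_facts(2)[OF l] by (simp add: Q V_def N_def)
      have eQ: "emeasure lebesgue Q = ennreal V" using cube_facts(3)[OF l] by (simp add: Q V_def N_def)
      have Qs[measurable]: "Q \<in> sets lebesgue" using cube_facts(1)[OF l] by (simp add: Q)
      have gam: "\<gamma> / real CARD('n) = \<gamma> / d" by (simp add: d_def)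
      show "ennreal (measure lebesgue Q powr (\<gamma> / real CARD('n) - 1)) * (\<integral>\<^sup>+ y\<in>Q. ennreal \<bar>f y\<bar> \<partial>lebesgue) \<le> ennreal B"
      proof (cases "l \<le> 1")
        case True
        have "(\<integral>\<^sup>+ y\<in>Q. ennreal \<bar>f y\<bar> \<partial>lebesgue) = (\<integral>\<^sup>+ y\<in>Q. g R y \<partial>lebesgue)"
        proof (intro nn_integral_cong)
          fix y
          show "ennreal \<bar>f y\<bar> * indicator Q y = g R y * indicator Q y"
          proof (cases "y \<in> Q")
            case yQ: True
            have "dist x y \<le> d * l" using cube_dist[of x a l y] xQ yQ by (simp add: Q d_def)
            also have "\<dots> \<le> d" using True d0 by simp
            finally have "norm y < real R" using R norm_triangle_ineq[of x "y - x"]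
              by (simp add: dist_norm norm_minus_commute)
            then show ?thesis using yQ by (simp add: g_def)
          qed simp
        qed
        also have "\<dots> \<le> ennreal (K * l ^ CARD('n))" using K[OF l True] xQ by (simp add: Q)
        also have "\<dots> \<le> ennreal (K' * V)" using V0 by (intro ennreal_leI) (simp add: K'_def V_def N_def mult_right_mono)
        finally have I: "(\<integral>\<^sup>+ y\<in>Q. ennreal \<bar>f y\<bar> \<partial>lebesgue) \<le> ennreal (K' * V)" .
        have "ennreal (measure lebesgue Q powr (\<gamma> / real CARD('n) - 1)) * (\<integral>\<^sup>+ y\<in>Q. ennreal \<bar>f y\<bar> \<partial>lebesgue)
            \<le> ennreal (V powr (\<gamma> / d - 1)) * ennreal (K' * V)"
          using I by (simp add: mQ gam mult_left_mono)
        also have "\<dots> = ennreal (V powr (\<gamma> / d - 1) * (K' * V))"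
          using V0 by (simp add: ennreal_mult K'_def)
        also have "\<dots> \<le> ennreal K'"
          using V0 assms(1) d0 l True
          by (intro ennreal_leI small_calc) (auto simp: V_def K'_def power_le_one)
        also have "\<dots> \<le> ennreal B" by (intro ennreal_leI) (simp add: B_def)
        finally show ?thesis .
      next
        case False
        have V1: "1 \<le> V" using False by (simp add: V_def one_le_power)
        define t where "t = V powr (- 1 / P)"
        have t0: "0 < t" using V0 by (simp add: t_def)
        have t1: "t \<le> 1" using V1 P1 unfolding t_def
          by (metis divide_nonneg_pos le_minus_one_simps(1) neg_le_0_iff_le order.trans powr_mono zero_less_one powr_zero_eq_one less_imp_le linorder_not_le zero_le_one ge_one_powr_ge_zero powr_le1 minus_divide_left)
        have "(\<integral>\<^sup>+ y\<in>Q. ennreal \<bar>f y\<bar> \<partial>lebesgue) \<le> (\<integral>\<^sup>+ y. (ennreal (c * t) + ennreal (c * t powr (1 - P)) * h y) * indicator Q y \<partial>lebesgue)"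
        proof (intro nn_integral_mono_AE)
          show "AE y in lebesgue. ennreal \<bar>f y\<bar> * indicator Q y \<le> (ennreal (c * t) + ennreal (c * t powr (1 - P)) * h y) * indicator Q y"
            using AEP
          proof (rule eventually_mono)
            fix y assume py: "p y \<le> P"
            have "\<bar>f y\<bar> \<le> c * t + c * t powr (1 - P) * (\<bar>f y\<bar> / c) powr p y"
              using pw_bound[OF c p1 py t0 t1] .
            then have "ennreal \<bar>f y\<bar> \<le> ennreal (c * t) + ennreal (c * t powr (1 - P)) * h y"
              using c t0 by (simp add: h_def ennreal_mult[symmetric] ennreal_plus[symmetric] del: ennreal_plus)
            then show "ennreal \<bar>f y\<bar> * indicator Q y \<le> (ennreal (c * t) + ennreal (c * t powr (1 - P)) * h y) * indicator Q y"
              by (auto split: split_indicator)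
          qed
        qed
        also have "\<dots> = ennreal (c * t) * emeasure lebesgue Q + ennreal (c * t powr (1 - P)) * (\<integral>\<^sup>+ y\<in>Q. h y \<partial>lebesgue)"
          by (simp add: distrib_right nn_integral_add nn_integral_cmult mult.assoc)
        also have "\<dots> \<le> ennreal (c * t) * ennreal V + ennreal (c * t powr (1 - P)) * ennreal Ar"
        proof -
          have "(\<integral>\<^sup>+ y\<in>Q. h y \<partial>lebesgue) \<le> (\<integral>\<^sup>+ y. h y \<partial>lebesgue)"
            by (intro nn_integral_mono) (auto split: split_indicator)
          then show ?thesis by (simp add: eQ Ar mult_left_mono)
        qed
        also have "\<dots> = ennreal (c * t * V + c * t powr (1 - P) * Ar)"
        proof -
          have e1: "ennreal (c * t) * ennreal V = ennreal (c * t * V)"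
            by (rule ennreal_mult[symmetric]) (use c t0 V0 in auto)
          have e2: "ennreal (c * t powr (1 - P)) * ennreal Ar = ennreal (c * t powr (1 - P) * Ar)"
            by (rule ennreal_mult[symmetric]) (use c t0 Ar0 in auto)
          show ?thesis unfolding e1 e2
            by (rule ennreal_plus[symmetric]) (use c t0 V0 Ar0 in auto)
        qed
        finally have I: "(\<integral>\<^sup>+ y\<in>Q. ennreal \<bar>f y\<bar> \<partial>lebesgue) \<le> ennreal (c * t * V + c * t powr (1 - P) * Ar)" .
        have "ennreal (measure lebesgue Q powr (\<gamma> / real CARD('n) - 1)) * (\<integral>\<^sup>+ y\<in>Q. ennreal \<bar>f y\<bar> \<partial>lebesgue)
            \<le> ennreal (V powr (\<gamma> / d - 1)) * ennreal (c * t * V + c * t powr (1 - P) * Ar)"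
          using I by (simp add: mQ gam mult_left_mono)
        also have "\<dots> = ennreal (V powr (\<gamma> / d - 1) * (c * t * V + c * t powr (1 - P) * Ar))"
          by (rule ennreal_mult[symmetric]) (use V0 c t0 Ar0 in auto)
        also have "\<dots> \<le> ennreal (c + c * Ar)"
        proof (intro ennreal_leI)
          have "\<gamma> / d * P < 1" using Pl assms(1) d0 by (simp add: field_simps)
          then show "V powr (\<gamma> / d - 1) * (c * t * V + c * t powr (1 - P) * Ar) \<le> c + c * Ar"
            using large_calc[OF V1 P1 c Ar0, of "\<gamma> / d"] by (simp add: t_def)
        qed
        also have "\<dots> \<le> ennreal B" by (intro ennreal_leI) (simp add: B_def)
        finally show ?thesis .
      qed
    qed
    then show "frac_maximal \<gamma> f x < \<infinity>"
      using ennreal_less_top[of B] by (simp add: le_less_trans)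
  qed
qed

end
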